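(* Let $H$ be a graph, $K$ a clique of $H$, and $x$ a vertex of $H$ not in $K$ that is adjacent to all vertices of $K$, such that all vertices of $K$ have the same closed neighborhood in $H-x$. For $0\le i\le |K|$, let $H_i$ be the graph obtained from $H$ by removing $i$ of the edges between $x$ and $K$. Then \[ (i-j)X_{H_k}+(j-k)X_{H_i}+(k-i)X_{H_j}=0\qquad\text{for any } 0\le i\le j\le k\le |K|. \]
   Context: All graphs are finite simple graphs. The chromatic symmetric function of a graph $G$ is $X_G=\sum_{\kappa}\prod_{v\in V(G)}x_{\kappa(v)}$, where $\kappa$ ranges over proper colorings $\kappa:V(G)\to\{1,2,\dots\}$. A clique is a set of pairwise adjacent vertices. The closed neighborhood of a vertex is the set consisting of the vertex and all vertices adjacent to it. *)

theory Defs
  imports Main "HOL-Library.FuncSet"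
begin

definition simple_graph :: "'a set \<Rightarrow> 'a set set \<Rightarrow> bool" where
  "simple_graph V E \<longleftrightarrow> finite V \<and> (\<forall>e\<in>E. \<exists>u v. u \<noteq> v \<and> u \<in> V \<and> v \<in> V \<and> e = {u, v})"

definition adj :: "'a set set \<Rightarrow> 'a \<Rightarrow> 'a \<Rightarrow> bool" where
  "adj E u v \<longleftrightarrow> u \<noteq> v \<and> {u, v} \<in> E"

definition is_clique :: "'a set \<Rightarrow> 'a set set \<Rightarrow> 'a set \<Rightarrow> bool" where
  "is_clique V E K \<longleftrightarrow> K \<subseteq> V \<and> (\<forall>u\<in>K. \<forall>v\<in>K. u \<noteq> v \<longrightarrow> adj E u v)"

definition del_vertex_E :: "'a set set \<Rightarrow> 'a \<Rightarrow> 'a set set" where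
  "del_vertex_E E x = {e \<in> E. x \<notin> e}"

definition closed_nbhd :: "'a set \<Rightarrow> 'a set set \<Rightarrow> 'a \<Rightarrow> 'a set" where
  "closed_nbhd V E v = insert v {u \<in> V. adj E u v}"

definition proper_coloring :: "'a set \<Rightarrow> 'a set set \<Rightarrow> ('a \<Rightarrow> nat) \<Rightarrow> bool" where
  "proper_coloring V E \<kappa> \<longleftrightarrow> \<kappa> \<in> extensional V \<and> (\<forall>v\<in>V. 1 \<le> \<kappa> v)
     \<and> (\<forall>u\<in>V. \<forall>v\<in>V. adj E u v \<longrightarrow> \<kappa> u \<noteq> \<kappa> v)"

text \<open>The chromatic symmetric function X_G, represented by its coefficient function:
  the coefficient of the monomial \<Prod>_c x_c^(\<alpha> c) is the number of proper colourings \<kappa>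
  with \<prod>_v x_(\<kappa> v) equal to that monomial.\<close>
definition csf :: "'a set \<Rightarrow> 'a set set \<Rightarrow> (nat \<Rightarrow> nat) \<Rightarrow> int" where
  "csf V E \<alpha> = int (card {\<kappa>. proper_coloring V E \<kappa> \<and> (\<forall>c. card {v \<in> V. \<kappa> v = c} = \<alpha> c)})"

definition remove_edges_to :: "'a set set \<Rightarrow> 'a \<Rightarrow> 'a set \<Rightarrow> 'a set set" where
  "remove_edges_to E x S = E - {{x, v} | v. v \<in> S}"

end

theory Submission
  imports Defs
begin

lemma adj_sym: "adj E u v \<longleftrightarrow> adj E v u"
  unfolding adj_def by (auto simp: insert_commute)

lemma adj_rem: "adj (remove_edges_to E x S) a b \<longleftrightarrow>
   adj E a b \<and> \<not>(a = x \<and> b \<in> S) \<and> \<not>(b = x \<and> a \<in> S)"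
  unfolding adj_def remove_edges_to_def by (auto simp: doubleton_eq_iff)

lemma fin_col:
  assumes "finite V"
  shows "finite {\<kappa>. \<kappa> \<in> extensional V \<and> (\<forall>c. card {v\<in>V. \<kappa> v = c} = \<alpha> c)}"
    (is "finite ?A")
proof (cases "?A = {}")
  case True then show ?thesis by (metis finite.emptyI)
next
  case False
  then obtain \<kappa>0 where k0: "\<kappa>0 \<in> ?A" by blast
  have "?A \<subseteq> PiE V (\<lambda>_. \<kappa>0 ` V)"
  proof
    fix \<kappa> assume k: "\<kappa> \<in> ?A"
    have "\<kappa> u \<in> \<kappa>0 ` V" if u: "u \<in> V" for u
    proof -
      have "card {v\<in>V. \<kappa> v = \<kappa> u} > 0"
        using u assms by (subst card_gt_0_iff) auto
      then have "\<alpha> (\<kappa> u) > 0" using k by auto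
      then have "card {v\<in>V. \<kappa>0 v = \<kappa> u} > 0" using k0 by auto
      then have "{v\<in>V. \<kappa>0 v = \<kappa> u} \<noteq> {}" by (metis card.empty less_irrefl)
      then show ?thesis by force
    qed
    then show "\<kappa> \<in> PiE V (\<lambda>_. \<kappa>0 ` V)" using k by (auto simp: PiE_iff)
  qed
  moreover have "finite (PiE V (\<lambda>_. \<kappa>0 ` V))" using assms by (simp add: finite_PiE)
  ultimately show ?thesis by (rule finite_subset)
qed

lemma proper_rem:
  assumes "S \<subseteq> K" "K \<subseteq> V" "x \<in> V" "\<forall>v\<in>K. adj E x v"
  shows "proper_coloring V (remove_edges_to E x S) \<kappa> \<longleftrightarrow>
     proper_coloring V (remove_edges_to E x K) \<kappa> \<and> (\<forall>v\<in>K-S. \<kappa> v \<noteq> \<kappa> x)"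
proof
  assume p: "proper_coloring V (remove_edges_to E x S) \<kappa>"
  have "\<kappa> v \<noteq> \<kappa> x" if "v \<in> K - S" for v
  proof -
    have "adj (remove_edges_to E x S) v x" using that assms
      by (auto simp: adj_rem adj_sym)
    then show ?thesis using p that assms unfolding proper_coloring_def by blast
  qed
  moreover have "proper_coloring V (remove_edges_to E x K) \<kappa>"
    using p assms(1) unfolding proper_coloring_def adj_rem by blast
  ultimately show "proper_coloring V (remove_edges_to E x K) \<kappa> \<and> (\<forall>v\<in>K-S. \<kappa> v \<noteq> \<kappa> x)"
    by blast
next
  assume h: "proper_coloring V (remove_edges_to E x K) \<kappa> \<and> (\<forall>v\<in>K-S. \<kappa> v \<noteq> \<kappa> x)"
  have "\<kappa> a \<noteq> \<kappa> b" if ab: "a \<in> V" "b \<in> V" "adj (remove_edges_to E x S) a b" for a b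
  proof (cases "adj (remove_edges_to E x K) a b")
    case True then show ?thesis using h ab unfolding proper_coloring_def by blast
  next
    case False
    then have "(a = x \<and> b \<in> K - S) \<or> (b = x \<and> a \<in> K - S)" using ab(3) assms(1)
      unfolding adj_rem by blast
    then show ?thesis using h by metis
  qed
  then show "proper_coloring V (remove_edges_to E x S) \<kappa>"
    using h unfolding proper_coloring_def by blast
qed

lemma aut:
  assumes "x \<notin> K" "v \<in> K" "w \<in> K" "v \<noteq> w \<Longrightarrow> adj E v w"
    and NB: "\<forall>u\<in>V. u \<noteq> x \<longrightarrow> ((u = v \<or> adj E u v) \<longleftrightarrow> (u = w \<or> adj E u w))"
    and ab: "a \<in> V" "b \<in> V" "adj (remove_edges_to E x K) a b"
  shows "adj (remove_edges_to E x K)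
     (if a = v then w else if a = w then v else a) (if b = v then w else if b = w then v else b)"
proof -
  let ?t = "\<lambda>u. if u = v then w else if u = w then v else u"
  have h: "adj E a b" "\<not>(a = x \<and> b \<in> K)" "\<not>(b = x \<and> a \<in> K)" using ab(3) unfolding adj_rem by auto
  have ne: "a \<noteq> b" using h(1) unfolding adj_def by auto
  have xv: "x \<noteq> v" "x \<noteq> w" using assms by auto
  have K1: "?t a \<in> K \<longleftrightarrow> a \<in> K" "?t b \<in> K \<longleftrightarrow> b \<in> K" using assms(2,3) by auto
  have X1: "?t a = x \<longleftrightarrow> a = x" "?t b = x \<longleftrightarrow> b = x" using xv by auto
  have key: "adj E (?t p) (?t q)" if pq: "p \<in> V" "q \<in> V" "adj E p q" "\<not>(p = x \<and> q \<in> K)" "\<not>(q = x \<and> p \<in> K)" for p q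
  proof -
    have pnq: "p \<noteq> q" using pq(3) unfolding adj_def by auto
    consider "p = v" | "p = w" | "p \<noteq> v \<and> p \<noteq> w" by blast
    then show ?thesis
    proof cases
      case 1
      show ?thesis
      proof (cases "q = w")
        case True then show ?thesis using 1 pq(3) adj_sym by (metis)
      next
        case False
        have "q \<noteq> x" using pq(5) 1 assms(2) by auto
        then have "q = w \<or> adj E q w" using NB pq(2) pq(3) 1 adj_sym by metis
        then have "adj E w q" using False adj_sym by metis
        then show ?thesis using 1 False pnq by auto
      qed
    next
      case 2
      show ?thesis
      proof (cases "q = v")
        case True then show ?thesis using 2 pq(3) adj_sym by (metis)
      next
        case False
        have "q \<noteq> x" using pq(5) 2 assms(3) by auto
        then have "q = v \<or> adj E q v" using NB pq(2) pq(3) 2 adj_sym by metis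
        then have "adj E v q" using False adj_sym by metis
        then show ?thesis using 2 False pnq by auto
      qed
    next
      case 3
      show ?thesis
      proof (cases "q = v")
        case True
        have "p \<noteq> x" using pq(4) True assms(2) by auto
        then have "p = w \<or> adj E p w" using NB pq(1) pq(3) True by metis
        then show ?thesis using 3 True by auto
      next
        case q: False
        show ?thesis
        proof (cases "q = w")
          case True
          have "p \<noteq> x" using pq(4) True assms(3) by auto
          then have "p = v \<or> adj E p v" using NB pq(1) pq(3) True by metis
          then show ?thesis using 3 True q by auto
        next
          case False then show ?thesis using 3 q pq(3) by auto
        qed
      qed
    qed
  qed
  show ?thesis unfolding adj_rem using key[OF ab(1,2) h] K1 X1 h by metis
qed

lemma card_swap:
  fixes F :: "'a set set"
  assumes "finite V" "v \<in> V" "w \<in> V" "x \<in> V" "x \<noteq> v" "x \<noteq> w"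
    and A: "\<forall>a\<in>V. \<forall>b\<in>V. adj F a b \<longrightarrow> adj F (if a = v then w else if a = w then v else a)
                                            (if b = v then w else if b = w then v else b)"
  shows "card {\<kappa>. proper_coloring V F \<kappa> \<and> (\<forall>c. card {u\<in>V. \<kappa> u = c} = \<alpha> c) \<and> \<kappa> v = \<kappa> x}
       \<le> card {\<kappa>. proper_coloring V F \<kappa> \<and> (\<forall>c. card {u\<in>V. \<kappa> u = c} = \<alpha> c) \<and> \<kappa> w = \<kappa> x}"
proof -
  define t where "t = (\<lambda>u. if u = v then w else if u = w then v else u)"
  have tt: "t (t u) = u" for u unfolding t_def by auto
  have tV: "u \<in> V \<Longrightarrow> t u \<in> V" for u using assms(2,3) unfolding t_def by auto
  have tnV: "u \<notin> V \<Longrightarrow> t u = u" for u using assms(2,3) unfolding t_def by auto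
  have injt: "inj t" by (metis tt injI)
  let ?C = "\<lambda>v. {\<kappa>. proper_coloring V F \<kappa> \<and> (\<forall>c. card {u\<in>V. \<kappa> u = c} = \<alpha> c) \<and> \<kappa> v = \<kappa> x}"
  have fin: "finite (?C w)"
    by (rule finite_subset[OF _ fin_col[OF assms(1), of \<alpha>]]) (auto simp: proper_coloring_def)
  have inj: "inj_on (\<lambda>\<kappa>. \<kappa> \<circ> t) (?C v)"
  proof (rule inj_onI)
    fix k1 k2 assume "k1 \<circ> t = k2 \<circ> t"
    then have "k1 (t (t u)) = k2 (t (t u))" for u by (metis comp_apply)
    then show "k1 = k2" using tt by auto
  qed
  have img: "(\<lambda>\<kappa>. \<kappa> \<circ> t) ` (?C v) \<subseteq> ?C w"
  proof
    fix k' assume "k' \<in> (\<lambda>\<kappa>. \<kappa> \<circ> t) ` (?C v)"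
    then obtain k where k: "k \<in> ?C v" and k': "k' = k \<circ> t" by blast
    have p: "proper_coloring V F k" and f: "\<forall>c. card {u\<in>V. k u = c} = \<alpha> c" and e: "k v = k x"
      using k by auto
    have "k' \<in> extensional V" using p tnV unfolding k' proper_coloring_def extensional_def by auto
    moreover have "\<forall>u\<in>V. 1 \<le> k' u" using p tV unfolding k' proper_coloring_def by auto
    moreover have "\<forall>a\<in>V. \<forall>b\<in>V. adj F a b \<longrightarrow> k' a \<noteq> k' b"
    proof (intro ballI impI)
      fix a b assume ab: "a \<in> V" "b \<in> V" "adj F a b"
      have "adj F (t a) (t b)" using A ab unfolding t_def by blast
      then show "k' a \<noteq> k' b" using p tV ab unfolding k' proper_coloring_def by auto
    qed
    ultimately have "proper_coloring V F k'" unfolding proper_coloring_def by blast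
    moreover have "card {u\<in>V. k' u = c} = \<alpha> c" for c
    proof -
      have "{u\<in>V. k' u = c} = t ` {u\<in>V. k u = c}"
        unfolding k' using tt tV by (auto simp: image_iff) (metis tt)
      then show ?thesis using f card_image[OF inj_on_subset[OF injt]] by auto
    qed
    moreover have "k' w = k' x" unfolding k' t_def using e assms(5,6) by auto
    ultimately show "k' \<in> ?C w" by blast
  qed
  show ?thesis by (rule card_inj_on_le[OF inj img fin])
qed

theorem corollary2p4:
  fixes V :: "'a set" and E :: "'a set set" and K :: "'a set" and x :: 'a
    and i j k :: nat and Si Sj Sk :: "'a set"
  assumes "simple_graph V E"
    and "is_clique V E K"
    and "x \<in> V" and "x \<notin> K"
    and "\<forall>v\<in>K. adj E x v"
    and "\<forall>u\<in>K. \<forall>v\<in>K. closed_nbhd (V - {x}) (del_vertex_E E x) u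
                        = closed_nbhd (V - {x}) (del_vertex_E E x) v"
    and "i \<le> j" and "j \<le> k" and "k \<le> card K"
    and "Si \<subseteq> K" and "card Si = i"
    and "Sj \<subseteq> K" and "card Sj = j"
    and "Sk \<subseteq> K" and "card Sk = k"
  shows "\<forall>\<alpha>. (int i - int j) * csf V (remove_edges_to E x Sk) \<alpha>
            + (int j - int k) * csf V (remove_edges_to E x Si) \<alpha>
            + (int k - int i) * csf V (remove_edges_to E x Sj) \<alpha> = 0"
proof
  fix \<alpha>
  have finV: "finite V" using assms(1) unfolding simple_graph_def by blast
  have KV: "K \<subseteq> V" using assms(2) unfolding is_clique_def by blast
  have cl: "\<And>v w. v \<in> K \<Longrightarrow> w \<in> K \<Longrightarrow> v \<noteq> w \<Longrightarrow> adj E v w"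
    using assms(2) unfolding is_clique_def by blast
  have NB: "\<forall>u\<in>V. u \<noteq> x \<longrightarrow> ((u = v \<or> adj E u v) \<longleftrightarrow> (u = w \<or> adj E u w))"
    if vw: "v \<in> K" "w \<in> K" for v w
  proof (intro ballI impI)
    fix u assume u: "u \<in> V" "u \<noteq> x"
    have mem: "u \<in> closed_nbhd (V - {x}) (del_vertex_E E x) z \<longleftrightarrow> (u = z \<or> adj E u z)"
      if "z \<in> K" for z
      using u that assms(4) unfolding closed_nbhd_def adj_def del_vertex_E_def by auto
    show "(u = v \<or> adj E u v) \<longleftrightarrow> (u = w \<or> adj E u w)"
      using mem[OF vw(1)] mem[OF vw(2)] assms(6) vw by metis
  qed
  define EK where "EK = remove_edges_to E x K"
  define C where "C = (\<lambda>v. {\<kappa>. proper_coloring V EK \<kappa> \<and> (\<forall>c. card {u\<in>V. \<kappa> u = c} = \<alpha> c) \<and> \<kappa> v = \<kappa> x})"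
  define C0 where "C0 = {\<kappa>. proper_coloring V EK \<kappa> \<and> (\<forall>c. card {u\<in>V. \<kappa> u = c} = \<alpha> c) \<and> (\<forall>v\<in>K. \<kappa> v \<noteq> \<kappa> x)}"
  define B where "B = card (C (SOME v. v \<in> K))"
  have le: "card (C v) \<le> card (C w)" if vw: "v \<in> K" "w \<in> K" for v w
    unfolding C_def
  proof (rule card_swap[OF finV])
    show "v \<in> V" "w \<in> V" "x \<in> V" "x \<noteq> v" "x \<noteq> w" using vw KV assms(3,4) by auto
    show "\<forall>a\<in>V. \<forall>b\<in>V. adj EK a b \<longrightarrow> adj EK (if a = v then w else if a = w then v else a)
                                            (if b = v then w else if b = w then v else b)"
      unfolding EK_def using aut[OF assms(4) vw _ NB[OF vw]] cl vw by blast
  qed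
  have cardC: "card (C v) = B" if "v \<in> K" for v
  proof -
    have "(SOME v. v \<in> K) \<in> K" using that by (rule someI)
    then show ?thesis unfolding B_def using le that by (meson antisym)
  qed
  have finC: "finite (C v)" for v
    unfolding C_def by (rule finite_subset[OF _ fin_col[OF finV, of \<alpha>]]) (auto simp: proper_coloring_def)
  have finC0: "finite C0"
    unfolding C0_def by (rule finite_subset[OF _ fin_col[OF finV, of \<alpha>]]) (auto simp: proper_coloring_def)
  have main: "csf V (remove_edges_to E x S) \<alpha> = int (card C0) + int (card S) * int B"
    if S: "S \<subseteq> K" for S
  proof -
    have eq: "{\<kappa>. proper_coloring V (remove_edges_to E x S) \<kappa> \<and> (\<forall>c. card {v \<in> V. \<kappa> v = c} = \<alpha> c)}
       = C0 \<union> (\<Union>v\<in>S. C v)"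
    proof (intro equalityI subsetI)
      fix \<kappa> assume "\<kappa> \<in> {\<kappa>. proper_coloring V (remove_edges_to E x S) \<kappa> \<and> (\<forall>c. card {v \<in> V. \<kappa> v = c} = \<alpha> c)}"
      then have p: "proper_coloring V EK \<kappa>" "\<forall>v\<in>K-S. \<kappa> v \<noteq> \<kappa> x" and f: "\<forall>c. card {v \<in> V. \<kappa> v = c} = \<alpha> c"
        using proper_rem[OF S KV assms(3,5)] unfolding EK_def by auto
      show "\<kappa> \<in> C0 \<union> (\<Union>v\<in>S. C v)"
      proof (cases "\<forall>v\<in>K. \<kappa> v \<noteq> \<kappa> x")
        case True then show ?thesis using p f unfolding C0_def by blast
      next
        case False
        then obtain v where "v \<in> K" "\<kappa> v = \<kappa> x" by blast
        then have "v \<in> S" using p by blast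
        then show ?thesis using p f \<open>\<kappa> v = \<kappa> x\<close> unfolding C_def by blast
      qed
    next
      fix \<kappa> assume h: "\<kappa> \<in> C0 \<union> (\<Union>v\<in>S. C v)"
      have p: "proper_coloring V EK \<kappa>" and f: "\<forall>c. card {v \<in> V. \<kappa> v = c} = \<alpha> c"
        using h unfolding C0_def C_def by auto
      have "\<forall>v\<in>K-S. \<kappa> v \<noteq> \<kappa> x"
      proof
        fix w assume w: "w \<in> K - S"
        show "\<kappa> w \<noteq> \<kappa> x"
        proof (cases "\<kappa> \<in> C0")
          case True then show ?thesis using w unfolding C0_def by blast
        next
          case False
          then obtain v where v: "v \<in> S" "\<kappa> v = \<kappa> x" using h unfolding C_def by blast
          have "adj EK w v" unfolding EK_def adj_rem using cl[of w v] w v S assms(4) by auto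
          then have "\<kappa> w \<noteq> \<kappa> v" using p w v S KV unfolding proper_coloring_def by blast
          then show ?thesis using v by simp
        qed
      qed
      then show "\<kappa> \<in> {\<kappa>. proper_coloring V (remove_edges_to E x S) \<kappa> \<and> (\<forall>c. card {v \<in> V. \<kappa> v = c} = \<alpha> c)}"
        using proper_rem[OF S KV assms(3,5)] p f unfolding EK_def by auto
    qed
    have finS: "finite S" using S KV finV by (meson finite_subset)
    have disj1: "C0 \<inter> (\<Union>v\<in>S. C v) = {}" using S unfolding C0_def C_def by blast
    have disj2: "\<forall>v\<in>S. \<forall>w\<in>S. v \<noteq> w \<longrightarrow> C v \<inter> C w = {}"
    proof (intro ballI impI)
      fix v w assume vw: "v \<in> S" "w \<in> S" "v \<noteq> w"
      have "adj EK v w" unfolding EK_def adj_rem using cl[of v w] vw S assms(4) by auto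
      have vV: "v \<in> V" "w \<in> V" using vw S KV by auto
      show "C v \<inter> C w = {}"
      proof (rule ccontr)
        assume "C v \<inter> C w \<noteq> {}"
        then obtain \<kappa> where "\<kappa> \<in> C v" "\<kappa> \<in> C w" by blast
        then have "proper_coloring V EK \<kappa>" "\<kappa> v = \<kappa> w" unfolding C_def by auto
        then show False using \<open>adj EK v w\<close> vV unfolding proper_coloring_def by blast
      qed
    qed
    have "card (C0 \<union> (\<Union>v\<in>S. C v)) = card C0 + card (\<Union>v\<in>S. C v)"
      by (rule card_Un_disjoint[OF finC0 _ disj1]) (simp add: finS finC)
    also have "card (\<Union>v\<in>S. C v) = (\<Sum>v\<in>S. card (C v))"
      by (rule card_UN_disjoint[OF finS]) (use finC disj2 in auto)
    also have "\<dots> = (\<Sum>v\<in>S. B)" using cardC S by (intro sum.cong) auto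
    also have "\<dots> = card S * B" by simp
    finally show ?thesis unfolding csf_def eq by simp
  qed
  show "(int i - int j) * csf V (remove_edges_to E x Sk) \<alpha>
            + (int j - int k) * csf V (remove_edges_to E x Si) \<alpha>
            + (int k - int i) * csf V (remove_edges_to E x Sj) \<alpha> = 0"
    unfolding main[OF assms(14)] main[OF assms(10)] main[OF assms(12)] assms(11,13,15)
    by (simp add: algebra_simps)
qed

end
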